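(* Let $q$ be a power of an odd prime, $d\geq 2$, let $A\subset\mathbb F_q$ be nonempty, let $E=A\times A\times\cdots\times A\subset\mathbb F_q^d$ ($d$ factors), and let $F\subset\mathbb F_q^d$ be nonempty. Then $$|\Delta(E,F)|\geq \min\left\{\frac{q}{2},\ \frac{|E|^{1-\frac1d}|F|}{4q^{d-1}}\right\}.$$
   Context: $\mathbb F_q$ is the finite field with $q$ elements, of characteristic greater than two. For $m=(m_1,\dots,m_d)\in\mathbb F_q^d$ put $\|m\|=m_1^2+\dots+m_d^2\in\mathbb F_q$. For $E,F\subset\mathbb F_q^d$ the distance set is $\Delta(E,F)=\{\|x-y\|\in\mathbb F_q: x\in E,\ y\in F\}$. *)

theory Defs
  imports "HOL-Analysis.Analysis"
begin

definition ffnorm :: "'a::comm_ring_1 ^ 'n \<Rightarrow> 'a" where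
  "ffnorm m = (\<Sum>i\<in>UNIV. (m $ i)^2)"

definition dist_set :: "('a::comm_ring_1 ^ 'n) set \<Rightarrow> ('a ^ 'n) set \<Rightarrow> 'a set" where
  "dist_set E F = {ffnorm (x - y) | x y. x \<in> E \<and> y \<in> F}"

definition cube :: "'a set \<Rightarrow> ('a ^ 'n) set" where
  "cube A = {x. \<forall>i. x $ i \<in> A}"

end

theory Submission
  imports Defs
begin


lemma sum_shift_add:
  fixes f :: "'a::{ab_group_add,finite} \<Rightarrow> 'b::comm_monoid_add"
  shows "(\<Sum>v\<in>UNIV. f (v + c)) = (\<Sum>v\<in>UNIV. f v)"
proof -
  have "bij_betw (\<lambda>v. v + c) UNIV UNIV"
    by (rule bij_betwI[where g="\<lambda>v. v - c"]) auto
  from sum.reindex_bij_betw[OF this, of f] show ?thesis by simp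
qed

lemma sum_shift_neg:
  fixes f :: "'a::{ab_group_add,finite} \<Rightarrow> 'b::comm_monoid_add"
  shows "(\<Sum>v\<in>UNIV. f (c - v)) = (\<Sum>v\<in>UNIV. f v)"
proof -
  have "bij_betw (\<lambda>v. c - v) UNIV UNIV"
    by (rule bij_betwI[where g="\<lambda>v. c - v"]) auto
  from sum.reindex_bij_betw[OF this, of f] show ?thesis by simp
qed

lemma sum_lin:
  fixes f :: "'a::{field,finite} \<Rightarrow> 'b::comm_monoid_add"
  assumes "g \<noteq> 0"
  shows "(\<Sum>s\<in>UNIV. f (d + s * g)) = (\<Sum>v\<in>UNIV. f v)"
proof -
  have "bij_betw (\<lambda>s. d + s * g) UNIV UNIV"
    by (rule bij_betwI[where g="\<lambda>v. (v - d) / g"]) (use assms in auto)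
  from sum.reindex_bij_betw[OF this, of f] show ?thesis by simp
qed

lemma card_sq_le2:
  fixes v :: "'a::{field,finite}"
  shows "card {s. s^2 = v} \<le> 2"
proof (cases "{s. s^2 = v} = {}")
  case True then show ?thesis by simp
next
  case False
  then obtain s0 where s0: "s0^2 = v" by auto
  have "{s. s^2 = v} \<subseteq> {s0, -s0}"
  proof
    fix s assume "s \<in> {s. s^2 = v}"
    then have "(s - s0) * (s + s0) = 0" using s0 by (simp add: power2_eq_square algebra_simps)
    then show "s \<in> {s0, -s0}" by (auto simp: eq_neg_iff_add_eq_0)
  qed
  then have "card {s. s^2 = v} \<le> card {s0, -s0}" by (intro card_mono) auto
  also have "\<dots> \<le> 2" by (simp add: card_insert_if)
  finally show ?thesis .
qed

lemma sum_sq_le: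
  fixes h :: "'a::{field,finite} \<Rightarrow> real"
  assumes "\<And>v. h v \<ge> 0"
  shows "(\<Sum>s\<in>UNIV. h ((c - s)^2)) \<le> 2 * (\<Sum>v\<in>UNIV. h v)"
proof -
  have "(\<Sum>s\<in>UNIV. h ((c - s)^2)) = (\<Sum>s\<in>UNIV. h (s^2))"
    using sum_shift_neg[of "\<lambda>s. h (s^2)" c] by simp
  also have "\<dots> = (\<Sum>v\<in>UNIV. (\<Sum>s\<in>{x. x \<in> UNIV \<and> x^2 = v}. h (s^2)))"
    by (rule sum.group[symmetric]) auto
  also have "\<dots> = (\<Sum>v\<in>UNIV. real (card {s. s^2 = v}) * h v)"
    by (intro sum.cong) auto
  also have "\<dots> \<le> (\<Sum>v\<in>UNIV. 2 * h v)"
    by (intro sum_mono mult_right_mono) (use card_sq_le2 assms in auto)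
  finally show ?thesis by (simp add: sum_distrib_left)
qed

lemma CS_sum:
  fixes g :: "'i \<Rightarrow> real"
  shows "(\<Sum>i\<in>I. g i)^2 \<le> real (card I) * (\<Sum>i\<in>I. (g i)^2)"
  using Cauchy_Schwarz_ineq_sum[of "\<lambda>_. 1" g I] by simp

lemma card_cube: "card (cube A :: ('a::finite^'n::finite) set) = card A ^ CARD('n)"
proof -
  have "bij_betw vec_lambda (PiE (UNIV::'n set) (\<lambda>_. A)) (cube A :: ('a^'n) set)"
    unfolding bij_betw_def
  proof
    show "inj_on vec_lambda (PiE (UNIV::'n set) (\<lambda>_. A))"
      by (auto simp: inj_on_def vec_lambda_inject)
    have "x \<in> vec_lambda ` (PiE (UNIV::'n set) (\<lambda>_. A))" if "x \<in> cube A" for x :: "'a^'n"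
    proof -
      have "vec_nth x \<in> PiE (UNIV::'n set) (\<lambda>_. A)" using that by (auto simp: cube_def)
      moreover have "x = vec_lambda (vec_nth x)" by simp
      ultimately show ?thesis by (metis image_eqI)
    qed
    then show "vec_lambda ` (PiE (UNIV::'n set) (\<lambda>_. A)) = (cube A :: ('a^'n) set)"
      by (auto simp: cube_def)
  qed
  then have "card (cube A :: ('a^'n) set) = card (PiE (UNIV::'n set) (\<lambda>_. A))"
    by (simp add: bij_betw_same_card)
  also have "\<dots> = card A ^ CARD('n)" by (simp add: card_PiE)
  finally show ?thesis .
qed



definition upd :: "'a^'n \<Rightarrow> 'n \<Rightarrow> 'a \<Rightarrow> 'a^'n" where
  "upd x k a = (\<chi> i. if i = k then a else x$i)"
definition cc :: "'n::finite \<Rightarrow> 'a::comm_ring_1^'n \<Rightarrow> 'a^'n \<Rightarrow> 'a" where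
  "cc k z y = (\<Sum>i\<in>UNIV-{k}. (z$i - y$i)^2)"
definition ej :: "'n \<Rightarrow> 'a::zero \<Rightarrow> 'a^'n" where
  "ej j s = (\<chi> i. if i = j then s else 0)"

lemma ffnorm_upd:
  fixes z y :: "'a::comm_ring_1^'n::finite"
  shows "ffnorm (upd z k a - y) = cc k z y + (a - y$k)^2"
proof -
  have "ffnorm (upd z k a - y) = (\<Sum>i\<in>UNIV. ((upd z k a - y)$i)^2)" by (simp add: ffnorm_def)
  also have "\<dots> = ((upd z k a - y)$k)^2 + (\<Sum>i\<in>UNIV-{k}. ((upd z k a - y)$i)^2)"
    by (rule sum.remove) auto
  also have "(\<Sum>i\<in>UNIV-{k}. ((upd z k a - y)$i)^2) = cc k z y"
    unfolding cc_def by (intro sum.cong) (auto simp: upd_def)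
  finally show ?thesis by (simp add: upd_def add.commute)
qed

lemma cc_shift_k:
  fixes z y :: "'a::comm_ring_1^'n::finite"
  shows "cc k z (y + ej k s) = cc k z y"
  unfolding cc_def by (intro sum.cong) (auto simp: ej_def)

lemma cc_shift_j:
  fixes z y :: "'a::comm_ring_1^'n::finite"
  assumes "j \<noteq> k"
  shows "cc k z (y + ej j s) = cc k z y + (s^2 - 2 * s * (z$j - y$j))"
proof -
  have "cc k z (y + ej j s) = (\<Sum>i\<in>UNIV-{k}. (z$i - y$i)^2 + (if i = j then s^2 - 2 * s * (z$j - y$j) else 0))"
    unfolding cc_def by (intro sum.cong) (auto simp: ej_def power2_eq_square algebra_simps)
  also have "\<dots> = cc k z y + (s^2 - 2 * s * (z$j - y$j))"
    unfolding cc_def sum.distrib using assms by (simp add: sum.delta)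
  finally show ?thesis .
qed

lemma sum_vec_shift:
  fixes f :: "'a::{ab_group_add,finite}^'n::finite \<Rightarrow> 'b::comm_monoid_add"
  shows "(\<Sum>y\<in>UNIV. f (y + w)) = (\<Sum>y\<in>UNIV. f y)"
proof -
  have "bij_betw (\<lambda>v. v + w) UNIV UNIV"
    by (rule bij_betwI[where g="\<lambda>v. v - w"]) auto
  from sum.reindex_bij_betw[OF this, of f] show ?thesis by simp
qed

lemma ej_k: "(ej j s :: 'a::zero^'n)$j = s" by (simp add: ej_def)



lemma diag_sum:
  fixes f :: "'a::{field,finite} \<Rightarrow> real" and z :: "'a^'n::finite"
  shows "(\<Sum>y\<in>UNIV. \<Sum>v\<in>UNIV. f (cc k z y + v) * f (cc k z y + v))
       = real CARD('a^'n) * (\<Sum>v\<in>UNIV. f v * f v)"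
proof -
  have "(\<Sum>v\<in>UNIV. f (cc k z y + v) * f (cc k z y + v)) = (\<Sum>v\<in>UNIV. f v * f v)" for y
    using sum_shift_add[of "\<lambda>v. f v * f v" "cc k z y"] by (simp add: add.commute)
  then show ?thesis by simp
qed

lemma corr_shift:
  fixes f :: "'a::{field,finite} \<Rightarrow> real"
  shows "(\<Sum>v\<in>UNIV. f (c1 + v) * f (c2 + v)) = (\<Sum>v\<in>UNIV. f v * f (v + (c2 - c1)))"
  using sum_shift_add[of "\<lambda>v. f v * f (v + (c2 - c1))" c1] by (simp add: algebra_simps)

lemma offdiag_sum:
  fixes f :: "'a::{field,finite} \<Rightarrow> real" and z w :: "'a^'n::finite"
  assumes two: "(2::'a) \<noteq> 0" and f0: "sum f UNIV = 0"
    and zk: "z$k = w$k" and ne: "z \<noteq> w"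
  shows "(\<Sum>y\<in>UNIV. \<Sum>v\<in>UNIV. f (cc k z y + v) * f (cc k w y + v)) = 0"
proof -
  obtain j where j: "z$j \<noteq> w$j" using ne by (auto simp: vec_eq_iff)
  with zk have jk: "j \<noteq> k" by auto
  define R where "R \<delta> = (\<Sum>v\<in>UNIV. f v * f (v + \<delta>))" for \<delta>
  define D where "D y = cc k w y - cc k z y" for y
  define g where "g = 2 * (z$j - w$j)"
  have g0: "g \<noteq> 0" using two j by (simp add: g_def)
  have inner: "(\<Sum>v\<in>UNIV. f (cc k z y + v) * f (cc k w y + v)) = R (D y)" for y
    unfolding R_def D_def by (rule corr_shift)
  have Dsh: "D (y + ej j s) = D y + s * g" for y s
    unfolding D_def g_def using cc_shift_j[OF jk, of w y s] cc_shift_j[OF jk, of z y s]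
    by (simp add: algebra_simps)
  have Rsum: "(\<Sum>\<delta>\<in>UNIV. R \<delta>) = 0"
  proof -
    have "(\<Sum>\<delta>\<in>UNIV. R \<delta>) = (\<Sum>v\<in>UNIV. f v * (\<Sum>\<delta>\<in>UNIV. f (v + \<delta>)))"
      unfolding R_def by (subst sum.swap) (simp add: sum_distrib_left)
    also have "\<dots> = 0"
    proof -
      have "(\<Sum>\<delta>\<in>UNIV. f (v + \<delta>)) = 0" for v
        using sum_shift_add[of f v] f0 by (simp add: add.commute)
      then show ?thesis by simp
    qed
    finally show ?thesis .
  qed
  have each: "(\<Sum>y\<in>UNIV. R (D y)) = (\<Sum>y\<in>UNIV. R (D y + s * g))" for s
    using sum_vec_shift[of "\<lambda>y. R (D y)" "ej j s"] by (simp add: Dsh)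
  have "real CARD('a) * (\<Sum>y\<in>UNIV. R (D y)) = (\<Sum>s\<in>(UNIV::'a set). \<Sum>y\<in>UNIV. R (D y + s * g))"
    using each by simp
  also have "\<dots> = (\<Sum>y\<in>UNIV. \<Sum>s\<in>(UNIV::'a set). R (D y + s * g))"
    by (rule sum.swap)
  also have "\<dots> = 0"
    using sum_lin[OF g0, of R] Rsum by simp
  finally have "(\<Sum>y\<in>UNIV. R (D y)) = 0" by simp
  then show ?thesis using inner by simp
qed



lemma sum_cube_split:
  fixes h :: "'a::{field,finite}^'n::finite \<Rightarrow> real" and k :: 'n
  assumes a0: "a0 \<in> A"
  defines "X0 \<equiv> {x \<in> (cube A :: ('a^'n) set). x$k = a0}"
  shows "(\<Sum>x\<in>cube A. h x) = (\<Sum>z\<in>X0. \<Sum>a\<in>A. h (upd z k a))"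
    and "card (cube A :: ('a^'n) set) = card X0 * card A"
proof -
  have bij: "bij_betw (\<lambda>(z,a). upd z k a) (X0 \<times> A) (cube A)"
  proof (rule bij_betwI[where g="\<lambda>x. (upd x k a0, x$k)"])
    show "(\<lambda>(z, a). upd z k a) \<in> X0 \<times> A \<rightarrow> cube A"
      by (auto simp: X0_def cube_def upd_def)
    show "(\<lambda>x. (upd x k a0, x $ k)) \<in> cube A \<rightarrow> X0 \<times> A"
      using a0 by (auto simp: X0_def cube_def upd_def)
    show "(\<lambda>x. (upd x k a0, x $ k)) ((\<lambda>(z, a). upd z k a) p) = p" if "p \<in> X0 \<times> A" for p
      using that by (auto simp: X0_def upd_def vec_eq_iff)
    show "(\<lambda>(z, a). upd z k a) (upd x k a0, x $ k) = x" for x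
      by (auto simp: upd_def vec_eq_iff)
  qed
  have "(\<Sum>x\<in>cube A. h x) = (\<Sum>p\<in>X0 \<times> A. h ((\<lambda>(z,a). upd z k a) p))"
    using sum.reindex_bij_betw[OF bij, of h] by simp
  also have "\<dots> = (\<Sum>z\<in>X0. \<Sum>a\<in>A. h (upd z k a))"
    by (simp add: sum.cartesian_product split_def)
  finally show "(\<Sum>x\<in>cube A. h x) = (\<Sum>z\<in>X0. \<Sum>a\<in>A. h (upd z k a))" .
  show "card (cube A :: ('a^'n) set) = card X0 * card A"
    using bij_betw_same_card[OF bij] by (simp add: card_cartesian_product)
qed

lemma step4:
  fixes G :: "'a::{field,finite}^'n::finite \<Rightarrow> 'a \<Rightarrow> real"
  assumes inv: "\<And>y s v. G (y + ej k s) v = G y v"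
  shows "(\<Sum>y\<in>UNIV. (G y ((a - y$k)^2))^2) \<le> 2 / real CARD('a) * (\<Sum>y\<in>UNIV. \<Sum>v\<in>UNIV. (G y v)^2)"
proof -
  define L where "L = (\<Sum>y\<in>UNIV. (G y ((a - y$k)^2))^2)"
  have each: "L = (\<Sum>y\<in>UNIV. (G y ((a - y$k - s)^2))^2)" for s
    unfolding L_def
    using sum_vec_shift[of "\<lambda>y. (G y ((a - y$k)^2))^2" "ej k s"]
    by (simp add: inv ej_k algebra_simps)
  have "real CARD('a) * L = (\<Sum>s\<in>(UNIV::'a set). \<Sum>y\<in>UNIV. (G y ((a - y$k - s)^2))^2)"
    using each by simp
  also have "\<dots> = (\<Sum>y\<in>UNIV. \<Sum>s\<in>(UNIV::'a set). (G y ((a - y$k - s)^2))^2)"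
    by (rule sum.swap)
  also have "\<dots> \<le> (\<Sum>y\<in>UNIV. 2 * (\<Sum>v\<in>UNIV. (G y v)^2))"
    by (intro sum_mono sum_sq_le) auto
  finally have "real CARD('a) * L \<le> 2 * (\<Sum>y\<in>UNIV. \<Sum>v\<in>UNIV. (G y v)^2)"
    by (simp add: sum_distrib_left)
  then show ?thesis unfolding L_def[symmetric]
    by (simp add: field_simps)
qed



lemma core:
  fixes A :: "'a::{field,finite} set" and F :: "('a^'n::finite) set"
    and k :: 'n and f :: "'a \<Rightarrow> real"
  assumes two: "(2::'a) \<noteq> 0" and a0: "a0 \<in> A" and f0: "sum f UNIV = 0"
  defines "X0 \<equiv> {x \<in> (cube A :: ('a^'n) set). x$k = a0}"
  shows "(\<Sum>x\<in>cube A. \<Sum>y\<in>F. f (ffnorm (x - y)))^2 \<le>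
     real (card F) * real (card A)^2 * (2 / real CARD('a)) * real (card X0) * real CARD('a^'n)
       * (\<Sum>v\<in>UNIV. f v * f v)"
proof -
  define G where "G y v = (\<Sum>z\<in>X0. f (cc k z y + v))" for y v
  define g where "g y a = G y ((a - y$k)^2)" for y a
  have Ginv: "G (y + ej k s) v = G y v" for y s v
    unfolding G_def by (simp add: cc_shift_k)
  have fin: "finite X0" "finite A" "finite F" by auto
  have S1: "(\<Sum>x\<in>cube A. \<Sum>y\<in>F. f (ffnorm (x - y))) = (\<Sum>y\<in>F. \<Sum>a\<in>A. g y a)"
  proof -
    have "(\<Sum>x\<in>cube A. \<Sum>y\<in>F. f (ffnorm (x - y)))
        = (\<Sum>z\<in>X0. \<Sum>a\<in>A. \<Sum>y\<in>F. f (cc k z y + (a - y$k)^2))"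
      using sum_cube_split(1)[OF a0, of "\<lambda>x. \<Sum>y\<in>F. f (ffnorm (x - y))" k]
      unfolding X0_def by (simp add: ffnorm_upd)
    also have "\<dots> = (\<Sum>z\<in>X0. \<Sum>y\<in>F. \<Sum>a\<in>A. f (cc k z y + (a - y$k)^2))"
      by (intro sum.cong refl sum.swap)
    also have "\<dots> = (\<Sum>y\<in>F. \<Sum>z\<in>X0. \<Sum>a\<in>A. f (cc k z y + (a - y$k)^2))"
      by (rule sum.swap)
    also have "\<dots> = (\<Sum>y\<in>F. \<Sum>a\<in>A. \<Sum>z\<in>X0. f (cc k z y + (a - y$k)^2))"
      by (intro sum.cong refl sum.swap)
    finally show ?thesis by (simp add: g_def G_def)
  qed
  have S2: "(\<Sum>y\<in>F. \<Sum>a\<in>A. g y a)^2 \<le> real (card F) * real (card A) * (\<Sum>a\<in>A. \<Sum>y\<in>UNIV. (g y a)^2)"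
  proof -
    have "(\<Sum>y\<in>F. \<Sum>a\<in>A. g y a) = (\<Sum>p\<in>F \<times> A. g (fst p) (snd p))"
      by (simp add: sum.cartesian_product split_def)
    then have "(\<Sum>y\<in>F. \<Sum>a\<in>A. g y a)^2 \<le> real (card (F \<times> A)) * (\<Sum>p\<in>F \<times> A. (g (fst p) (snd p))^2)"
      using CS_sum[of "\<lambda>p. g (fst p) (snd p)" "F \<times> A"] by simp
    also have "(\<Sum>p\<in>F \<times> A. (g (fst p) (snd p))^2) = (\<Sum>y\<in>F. \<Sum>a\<in>A. (g y a)^2)"
      by (simp add: sum.cartesian_product split_def)
    also have "\<dots> = (\<Sum>a\<in>A. \<Sum>y\<in>F. (g y a)^2)" by (rule sum.swap)
    also have "\<dots> \<le> (\<Sum>a\<in>A. \<Sum>y\<in>UNIV. (g y a)^2)"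
      by (intro sum_mono sum_mono2) auto
    finally show ?thesis
      by (simp add: card_cartesian_product mult_left_mono)
  qed
  have S3: "(\<Sum>y\<in>UNIV. (g y a)^2) \<le> 2 / real CARD('a) * (\<Sum>y\<in>UNIV. \<Sum>v\<in>UNIV. (G y v)^2)" for a
    unfolding g_def by (rule step4) (rule Ginv)
  have S4: "(\<Sum>y\<in>UNIV. \<Sum>v\<in>UNIV. (G y v)^2) = real (card X0) * (real CARD('a^'n) * (\<Sum>v\<in>UNIV. f v * f v))"
  proof -
    have "(\<Sum>y\<in>UNIV. \<Sum>v\<in>UNIV. (G y v)^2)
        = (\<Sum>y\<in>UNIV. \<Sum>v\<in>UNIV. \<Sum>z\<in>X0. \<Sum>w\<in>X0. f (cc k z y + v) * f (cc k w y + v))"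
      unfolding G_def power2_eq_square by (simp add: sum_product)
    also have "\<dots> = (\<Sum>y\<in>UNIV. \<Sum>z\<in>X0. \<Sum>v\<in>UNIV. \<Sum>w\<in>X0. f (cc k z y + v) * f (cc k w y + v))"
      by (intro sum.cong refl sum.swap)
    also have "\<dots> = (\<Sum>y\<in>UNIV. \<Sum>z\<in>X0. \<Sum>w\<in>X0. \<Sum>v\<in>UNIV. f (cc k z y + v) * f (cc k w y + v))"
      by (intro sum.cong refl sum.swap)
    also have "\<dots> = (\<Sum>z\<in>X0. \<Sum>y\<in>UNIV. \<Sum>w\<in>X0. \<Sum>v\<in>UNIV. f (cc k z y + v) * f (cc k w y + v))"
      by (rule sum.swap)
    also have "\<dots> = (\<Sum>z\<in>X0. \<Sum>w\<in>X0. \<Sum>y\<in>UNIV. \<Sum>v\<in>UNIV. f (cc k z y + v) * f (cc k w y + v))"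
      by (intro sum.cong refl sum.swap)
    also have "\<dots> = (\<Sum>z\<in>X0. \<Sum>w\<in>X0. if z = w then real CARD('a^'n) * (\<Sum>v\<in>UNIV. f v * f v) else 0)"
    proof (intro sum.cong refl)
      fix z w assume "z \<in> X0" "w \<in> X0"
      then have zk: "z$k = w$k" by (simp add: X0_def)
      show "(\<Sum>y\<in>UNIV. \<Sum>v\<in>UNIV. f (cc k z y + v) * f (cc k w y + v)) =
          (if z = w then real CARD('a^'n) * (\<Sum>v\<in>UNIV. f v * f v) else 0)"
        using diag_sum[of f k z] offdiag_sum[OF two f0 zk] by auto
    qed
    also have "\<dots> = real (card X0) * (real CARD('a^'n) * (\<Sum>v\<in>UNIV. f v * f v))"
      using fin(1) by (simp add: sum.delta)
    finally show ?thesis .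
  qed
  have "(\<Sum>x\<in>cube A. \<Sum>y\<in>F. f (ffnorm (x - y)))^2 \<le>
      real (card F) * real (card A) * (\<Sum>a\<in>A. 2 / real CARD('a) * (real (card X0) * (real CARD('a^'n) * (\<Sum>v\<in>UNIV. f v * f v))))"
    unfolding S1 using S2 S3[unfolded S4]
    by (smt (verit, best) mult_left_mono of_nat_0_le_iff sum_mono zero_le_mult_iff)
  then show ?thesis by (simp add: power2_eq_square algebra_simps)
qed



theorem mainTheorem4:
  fixes A :: "'a::{field,finite} set"
    and F :: "('a ^ 'n) set"
  assumes char: "(2::'a) \<noteq> 0"
    and d: "CARD('n) \<ge> 2"
    and A: "A \<noteq> {}"
    and F: "F \<noteq> {}"
  shows "real (card (dist_set (cube A :: ('a ^ 'n) set) F)) \<ge>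
    min (real CARD('a) / 2)
        (real (card (cube A :: ('a ^ 'n) set)) powr (1 - 1 / real CARD('n)) * real (card F)
           / (4 * real CARD('a) ^ (CARD('n) - 1)))"
proof -
  define E where "E = (cube A :: ('a ^ 'n) set)"
  define T where "T = dist_set E F"
  define q where "q = real CARD('a)"
  define n where "n = CARD('n)"
  obtain a0 where a0: "a0 \<in> A" using A by auto
  define k :: 'n where "k = undefined"
  define X0 where "X0 = {x \<in> E. x$k = a0}"
  define nu where "nu w = (\<Sum>x\<in>E. \<Sum>y\<in>F. if ffnorm (x - y) = w then 1 else (0::real))" for w
  define N where "N = real (card E) * real (card F)"
  define f where "f w = nu w - N / q" for w
  have q0: "q > 0" unfolding q_def by simp
  have n2: "n \<ge> 2" using d n_def by simp
  have cardE: "card E = card A ^ n" unfolding E_def n_def by (rule card_cube)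
  have cardE2: "card E = card X0 * card A"
    unfolding E_def X0_def by (rule sum_cube_split(2)[OF a0])
  have Apos: "card A > 0" using A by (simp add: card_gt_0_iff)
  have Fpos: "card F > 0" using F by (simp add: card_gt_0_iff)
  have cardX0: "card X0 = card A ^ (n - 1)"
  proof -
    have "card X0 * card A = card A ^ (n - 1) * card A"
    proof -
      have "n = Suc (n - 1)" using n2 by simp
      then have "card A ^ n = card A ^ (n - 1) * card A" by (metis power_Suc2)
      then show ?thesis using cardE cardE2 by simp
    qed
    then show ?thesis using Apos A by auto
  qed
  have Npos: "N > 0" unfolding N_def using cardE Apos Fpos by simp
  have nu_sum: "(\<Sum>w\<in>UNIV. nu w) = N"
  proof -
    have "(\<Sum>w\<in>UNIV. nu w) = (\<Sum>x\<in>E. \<Sum>y\<in>F. \<Sum>w\<in>UNIV. if ffnorm (x - y) = w then 1 else (0::real))"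
      unfolding nu_def by (subst sum.swap) (intro sum.cong refl sum.swap)
    also have "\<dots> = N" by (simp add: N_def)
    finally show ?thesis .
  qed
  have f0: "sum f UNIV = 0"
    unfolding f_def using q0 by (simp add: sum_subtractf nu_sum q_def)
  have fnu: "(\<Sum>x\<in>E. \<Sum>y\<in>F. f (ffnorm (x - y))) = (\<Sum>w\<in>UNIV. f w * nu w)"
  proof -
    have "(\<Sum>w\<in>UNIV. f w * nu w) = (\<Sum>x\<in>E. \<Sum>y\<in>F. \<Sum>w\<in>UNIV. f w * (if ffnorm (x - y) = w then 1 else 0))"
      unfolding nu_def sum_distrib_left by (subst sum.swap) (intro sum.cong refl sum.swap)
    also have "\<dots> = (\<Sum>x\<in>E. \<Sum>y\<in>F. f (ffnorm (x - y)))"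
      by (simp add: if_distrib cong: if_cong)
    finally show ?thesis by simp
  qed
  define S0 where "S0 = (\<Sum>w\<in>UNIV. f w * f w)"
  have S0nn: "S0 \<ge> 0" unfolding S0_def by (intro sum_nonneg) simp
  have fnu2: "(\<Sum>w\<in>UNIV. f w * nu w) = S0"
  proof -
    have "(\<Sum>w\<in>UNIV. f w * nu w) = (\<Sum>w\<in>UNIV. f w * f w + f w * (N / q))"
      by (intro sum.cong) (auto simp: f_def algebra_simps)
    also have "\<dots> = S0" unfolding S0_def sum.distrib by (simp add: sum_distrib_right[symmetric] sum_divide_distrib[symmetric] f0)
    finally show ?thesis .
  qed
  define C where "C = real (card F) * real (card A)^2 * (2 / q) * real (card X0) * real CARD('a^'n)"
  have Cnn: "C \<ge> 0" unfolding C_def using q0 by simp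
  have core': "S0^2 \<le> C * S0"
    using core[OF char a0 f0, of F k] fnu fnu2
    unfolding C_def S0_def X0_def E_def q_def by simp
  have S0C: "S0 \<le> C"
  proof (cases "S0 = 0")
    case True then show ?thesis using Cnn by simp
  next
    case False
    then have "S0 > 0" using S0nn by simp
    then show ?thesis using core' by (simp add: power2_eq_square)
  qed
  define t where "t = real (card T)"
  have nuS: "(\<Sum>w\<in>UNIV. nu w * nu w) = S0 + N^2 / q"
  proof -
    have "(\<Sum>w\<in>UNIV. nu w * nu w) = (\<Sum>w\<in>UNIV. f w * f w + 2 * (N / q) * f w + (N/q)^2)"
      using q0 by (intro sum.cong) (auto simp: f_def power2_eq_square field_simps)
    also have "\<dots> = S0 + 2 * (N / q) * sum f UNIV + q * (N/q)^2"
      unfolding S0_def sum.distrib by (simp add: sum_distrib_left q_def)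
    also have "\<dots> = S0 + N^2 / q" using f0 q0 by (simp add: power2_eq_square)
    finally show ?thesis .
  qed
  have nu_out: "nu w = 0" if "w \<notin> T" for w
  proof -
    have "ffnorm (x - y) \<noteq> w" if "x \<in> E" "y \<in> F" for x y
      using that \<open>w \<notin> T\<close> unfolding T_def dist_set_def by blast
    then show ?thesis unfolding nu_def by (simp cong: sum.cong)
  qed
  have finT: "finite T" by simp
  have CS: "N^2 \<le> t * (S0 + N^2 / q)"
  proof -
    have "N = (\<Sum>w\<in>T. nu w)"
      using nu_sum sum.mono_neutral_right[of UNIV T nu] nu_out by auto
    then have "N^2 \<le> t * (\<Sum>w\<in>T. (nu w)^2)" unfolding t_def using CS_sum[of nu T] by simp
    moreover have "(\<Sum>w\<in>T. (nu w)^2) \<le> (\<Sum>w\<in>UNIV. nu w * nu w)"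
      unfolding power2_eq_square by (rule sum_mono2) auto
    moreover have "t * (\<Sum>w\<in>T. (nu w)^2) \<le> t * (\<Sum>w\<in>UNIV. nu w * nu w)"
      using calculation(2) by (intro mult_left_mono) (auto simp: t_def)
    ultimately show ?thesis using nuS by simp
  qed
  define a where "a = real (card A)"
  define X where "X = real (card X0)"
  have apos: "a > 0" using Apos a_def by simp
  have Xdef: "X = a ^ (n - 1)" using cardX0 X_def a_def by simp
  have EX: "real (card E) = a * X" using cardE2 a_def X_def by simp
  have powr_eq: "real (card E) powr (1 - 1 / real n) = X"
  proof -
    have "real (card E) = a ^ n" using cardE a_def by simp
    then have "real (card E) powr (1 - 1 / real n) = a powr (real n * (1 - 1 / real n))"
      using apos by (simp add: powr_realpow[symmetric] powr_powr)
    also have "real n * (1 - 1 / real n) = real (n - 1)" using n2 by (simp add: field_simps of_nat_diff)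
    finally show ?thesis using apos Xdef by (simp add: powr_realpow)
  qed
  have qn: "real CARD('a^'n) = q * q ^ (n - 1)"
    using n2 by (simp add: q_def n_def power_Suc[symmetric] Suc_diff_le[symmetric])
  define B where "B = X * real (card F) / (4 * q ^ (n - 1))"
  have CB: "N^2 = 2 * C * B"
    unfolding N_def C_def B_def EX qn using q0 apos
    by (simp add: field_simps power2_eq_square X_def a_def)
  have main: "min (q / 2) B \<le> t"
  proof (cases "t \<ge> q / 2")
    case True then show ?thesis by simp
  next
    case False
    then have "t * (N^2 / q) \<le> N^2 / 2" using q0 Npos
    proof -
      have "t / q \<le> 1 / 2" using False q0 by (simp add: field_simps)
      then have "(t / q) * N^2 \<le> (1/2) * N^2" by (intro mult_right_mono) auto
      then show ?thesis by (simp add: field_simps)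
    qed
    moreover have "t * S0 \<le> t * C" using S0C by (intro mult_left_mono) (auto simp: t_def)
    moreover have "N^2 \<le> t * S0 + t * (N^2 / q)" using CS by (simp add: distrib_left)
    ultimately have "N^2 \<le> t * C + N^2 / 2" by linarith
    then have "C * B \<le> t * C" using CB by (simp add: algebra_simps)
    moreover have "C > 0" using CB Npos Cnn by (cases "C = 0") auto
    ultimately have "B \<le> t" by (simp add: mult.commute)
    then show ?thesis by simp
  qed
  moreover have "real (card (cube A :: ('a^'n) set)) powr (1 - 1 / real CARD('n)) = real (card X0)"
    using powr_eq by (simp add: E_def n_def X_def)
  ultimately show ?thesis
    unfolding B_def t_def T_def E_def q_def X_def n_def by simp
qed


end
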